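(* For $k\geq 3$ and $r\geq 2$, $$\Delta^{M(k;r)}(k;r)\leq \Delta^{M(k-1;r)}(k-1;r)+M(k;r-1)-1.$$
   Context: A sequence of positive integers $w_1<\dots<w_n$ is an ascending wave if $w_{i+1}-w_i \geq w_i-w_{i-1}$ for $2\le i\le n-1$. $AW(k;r)$ is the least $N$ such that every $r$-coloring of $\{1,\dots,N\}$ contains a $k$-term monochromatic ascending wave. For $k\ge 2$ and $M\ge AW(k;r)$: for an $r$-coloring $\psi$ of $\{1,\dots,M\}$, $\delta_k(\psi)$ is the minimum of $w_k-w_{k-1}$ over all monochromatic $k$-term ascending waves $(w_1,\dots,w_k)$ under $\psi$, and $\Delta^M(k;r)$ is the maximum of $\delta_k(\psi)$ over all $r$-colorings $\psi$ of $\{1,\dots,M\}$. The integers $M(k;r)$ are defined by $M(k;1)=k$, $M(1;r)=1$, $M(2;r)=r+1$, and for $k\ge3$, $r\ge2$, $M(k;r)=M(k-1;r)+\Delta^{M(k-1;r)}(k-1;r)+M(k;r-1)-1$; one has $M(k;r)\ge AW(k;r)$ so these quantities are defined. *)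

theory Defs
  imports Main
begin

definition ascending_wave :: "(nat \<Rightarrow> nat) \<Rightarrow> nat \<Rightarrow> bool" where
  "ascending_wave w n \<longleftrightarrow>
     (\<forall>i\<in>{1..n}. 1 \<le> w i) \<and>
     (\<forall>i\<in>{1..<n}. w i < w (Suc i)) \<and>
     (\<forall>i\<in>{2..n-1}. w (Suc i) - w i \<ge> w i - w (i - 1))"

definition coloring :: "nat \<Rightarrow> nat \<Rightarrow> (nat \<Rightarrow> nat) \<Rightarrow> bool" where
  "coloring r N psi \<longleftrightarrow> (\<forall>i\<in>{1..N}. psi i < r)"

definition mono_wave :: "(nat \<Rightarrow> nat) \<Rightarrow> nat \<Rightarrow> nat \<Rightarrow> (nat \<Rightarrow> nat) \<Rightarrow> bool" where
  "mono_wave psi N k w \<longleftrightarrow> ascending_wave w k \<and> (\<forall>i\<in>{1..k}. w i \<le> N)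
     \<and> (\<forall>i\<in>{1..k}. psi (w i) = psi (w 1))"

definition AW :: "nat \<Rightarrow> nat \<Rightarrow> nat" where
  "AW k r = (LEAST N. \<forall>psi. coloring r N psi \<longrightarrow> (\<exists>w. mono_wave psi N k w))"

definition delta :: "nat \<Rightarrow> nat \<Rightarrow> (nat \<Rightarrow> nat) \<Rightarrow> nat" where
  "delta k M psi = Min {w k - w (k - 1) | w. mono_wave psi M k w}"

definition Delta :: "nat \<Rightarrow> nat \<Rightarrow> nat \<Rightarrow> nat" where
  "Delta M k r = Max {delta k M psi | psi. coloring r M psi}"

text \<open>M(k;r); values for k = 0 or r = 0 are irrelevant conventions.\<close>
function Mf :: "nat \<Rightarrow> nat \<Rightarrow> nat" where
  "Mf k r = (if k = 0 \<or> r = 0 then 0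
             else if r = 1 then k
             else if k = 1 then 1
             else if k = 2 then r + 1
             else Mf (k - 1) r + Delta (Mf (k - 1) r) (k - 1) r + Mf k (r - 1) - 1)"
  by pat_completeness auto
termination by (relation "measure (\<lambda>(k, r). k + r)") auto

declare Mf.simps[simp del]

end

theory Submission
  imports Defs
begin

lemma delta_mem:
  assumes "k \<ge> 1" and "\<exists>w. mono_wave psi M k w"
  shows "\<exists>w. mono_wave psi M k w \<and> w k - w (k - 1) = delta k M psi"
proof -
  let ?S = "{w k - w (k - 1) | w. mono_wave psi M k w}"
  have "?S \<subseteq> {..M}"
  proof
    fix x assume "x \<in> ?S"
    then obtain w where "x = w k - w (k - 1)" "mono_wave psi M k w" by blast
    then show "x \<in> {..M}" using assms(1) unfolding mono_wave_def by force
  qed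
  then have fin: "finite ?S" using finite_subset by blast
  have ne: "?S \<noteq> {}" using assms(2) by blast
  have "delta k M psi \<in> ?S" unfolding delta_def using Min_in[OF fin ne] .
  then show ?thesis by auto
qed

lemma delta_le_M:
  assumes "k \<ge> 1" and "\<exists>w. mono_wave psi M k w"
  shows "delta k M psi \<le> M"
proof -
  obtain w where "mono_wave psi M k w" "w k - w (k - 1) = delta k M psi"
    using delta_mem[OF assms] by blast
  then show ?thesis using assms(1) unfolding mono_wave_def by force
qed

lemma Delta_fin:
  assumes "k \<ge> 1" and "\<forall>psi. coloring r M psi \<longrightarrow> (\<exists>w. mono_wave psi M k w)"
  shows "finite {delta k M psi | psi. coloring r M psi}"
proof -
  have "{delta k M psi | psi. coloring r M psi} \<subseteq> {..M}"
    using delta_le_M[OF assms(1)] assms(2) by auto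
  then show ?thesis using finite_subset by blast
qed

lemma Delta_ge:
  assumes "k \<ge> 1" and "\<forall>psi. coloring r M psi \<longrightarrow> (\<exists>w. mono_wave psi M k w)"
    and "coloring r M psi"
  shows "delta k M psi \<le> Delta M k r"
  unfolding Delta_def using Delta_fin[OF assms(1,2)] assms(3)
  by (intro Max_ge) auto

lemma Delta_le:
  assumes "k \<ge> 1" and "r \<ge> 1" and "\<forall>psi. coloring r M psi \<longrightarrow> (\<exists>w. mono_wave psi M k w)"
    and "\<And>psi. coloring r M psi \<Longrightarrow> delta k M psi \<le> B"
  shows "Delta M k r \<le> B"
proof -
  have "coloring r M (\<lambda>_. 0)" using assms(2) unfolding coloring_def by auto
  then have ne: "{delta k M psi | psi. coloring r M psi} \<noteq> {}" by blast
  show ?thesis unfolding Delta_def using Delta_fin[OF assms(1,3)] ne assms(4)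
    by (subst Max_le_iff) auto
qed

lemma wave_extend:
  assumes "ascending_wave w n" "n \<ge> 2" "x - w n \<ge> w n - w (n - 1)" "x > w n"
  shows "ascending_wave (w(Suc n := x)) (Suc n)"
  using assms unfolding ascending_wave_def
  apply (intro conjI ballI)
  subgoal for i by (cases "i = Suc n") auto
  subgoal for i by (cases "i = n") auto
  subgoal for i by (cases "i = n") auto
  done

lemma wave_shift:
  assumes "ascending_wave u n"
  shows "ascending_wave (\<lambda>i. u i + s) n"
  using assms unfolding ascending_wave_def by auto

lemma step:
  fixes k r M' D L M :: nat and psi :: "nat \<Rightarrow> nat"
  assumes k3: "k \<ge> 3" and r2: "r \<ge> 2"
  and E1: "\<forall>psi. coloring r M' psi \<longrightarrow> (\<exists>w. mono_wave psi M' (k-1) w)"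
  and E2: "\<forall>psi. coloring (r-1) L psi \<longrightarrow> (\<exists>w. mono_wave psi L k w)"
  and D: "D = Delta M' (k-1) r"
  and M: "M = M' + D + L - 1"
  and col: "coloring r M psi"
  shows "\<exists>w. mono_wave psi M k w \<and> w k - w (k-1) \<le> D + L - 1"
proof -
  have "coloring (r-1) L (\<lambda>_. 0)" using r2 unfolding coloring_def by auto
  then obtain u0 where "mono_wave (\<lambda>_. 0) L k u0" using E2 by blast
  then have L1: "L \<ge> 1" using k3 unfolding mono_wave_def ascending_wave_def
    by (metis atLeastAtMost_iff le_trans nat_le_linear not_one_le_zero numeral_le_one_iff semiring_norm(70))
  have colM': "coloring r M' psi" using col L1 M unfolding coloring_def by auto
  have k1: "k - 1 \<ge> 1" using k3 by auto
  have dle: "delta (k-1) M' psi \<le> D" using Delta_ge[OF k1 E1 colM'] D by simp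
  obtain w where w: "mono_wave psi M' (k-1) w" and wd: "w (k-1) - w (k-1-1) = delta (k-1) M' psi"
    using delta_mem[OF k1] E1 colM' by blast
  define d where "d = w (k-1) - w (k-1-1)"
  define c where "c = psi (w 1)"
  define a where "a = w (k-1) + d"
  have wk1: "w (k-1) \<le> M'" "w (k-1) \<ge> 1" "w 1 \<ge> 1" "w 1 \<le> M'"
    using w k1 unfolding mono_wave_def ascending_wave_def by auto
  have dpos: "d > 0"
  proof -
    have "k - 1 - 1 \<in> {1..<k-1}" using k3 by auto
    then have "w (k-1-1) < w (Suc (k-1-1))" using w unfolding mono_wave_def ascending_wave_def by blast
    moreover have "Suc (k-1-1) = k - 1" using k3 by auto
    ultimately show ?thesis unfolding d_def by auto
  qed
  have cr: "c < r" using col wk1 L1 M unfolding c_def coloring_def by auto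
  have dD: "d \<le> D" using dle wd d_def by simp
  show ?thesis
  proof (cases "\<exists>x. a \<le> x \<and> x \<le> a + L - 1 \<and> psi x = c")
    case True
    then obtain x where x: "a \<le> x" "x \<le> a + L - 1" "psi x = c" by blast
    define w' where "w' = w(k := x)"
    have Sk: "Suc (k-1) = k" using k3 by simp
    have aw: "ascending_wave w' k"
    proof -
      have h1: "w (k-1) < x" using x dpos a_def by auto
      have h2: "x - w (k-1) \<ge> w (k-1) - w (k-1-1)" using x(1) unfolding a_def d_def[symmetric] by linarith
      have h3: "ascending_wave w (k-1)" using w unfolding mono_wave_def by auto
      have "k - 1 \<ge> 2" using k3 by auto
      from wave_extend[OF h3 this h2 h1] show ?thesis unfolding w'_def Sk .
    qed
    have "mono_wave psi M k w'"
      unfolding mono_wave_def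
    proof (intro conjI ballI aw)
      fix i assume i: "i \<in> {1..k}"
      show "w' i \<le> M"
      proof (cases "i = k")
        case True
        then have "w' i = x" unfolding w'_def by simp
        moreover have "x \<le> M" using x(2) L1 M dD wk1(1) unfolding a_def by linarith
        ultimately show ?thesis by simp
      next
        case False
        then have "i \<in> {1..k-1}" using i by auto
        then have "w i \<le> M'" using w unfolding mono_wave_def by auto
        moreover have "w' i = w i" using False unfolding w'_def by simp
        ultimately show ?thesis using L1 M by linarith
      qed
      have w1: "w' 1 = w 1" using k3 unfolding w'_def by simp
      show "psi (w' i) = psi (w' 1)"
      proof (cases "i = k")
        case True
        then have "w' i = x" unfolding w'_def by simp
        then show ?thesis using w1 x(3) unfolding c_def by simp
      next
        case False
        then have "i \<in> {1..k-1}" using i by auto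
        then have "psi (w i) = psi (w 1)" using w unfolding mono_wave_def by blast
        moreover have "w' i = w i" using False unfolding w'_def by simp
        ultimately show ?thesis using w1 by simp
      qed
    qed
    moreover have "w' k - w' (k-1) \<le> D + L - 1"
      using x dD L1 k3 unfolding w'_def a_def by auto
    ultimately show ?thesis by blast
  next
    case False
    define s where "s = a - 1"
    define g where "g = (\<lambda>v::nat. if v > c then v - 1 else v)"
    define psi' where "psi' = (\<lambda>j. g (psi (j + s)))"
    have a1: "a \<ge> 1" using wk1 a_def by auto
    have noc: "\<And>j. j \<in> {1..L} \<Longrightarrow> psi (j + s) \<noteq> c"
    proof -
      fix j assume j: "j \<in> {1..L}"
      have "a \<le> j + s" "j + s \<le> a + L - 1" using j a1 unfolding s_def by auto
      then show "psi (j + s) \<noteq> c" using False by blast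
    qed
    have sa: "s + 1 = a" using a1 unfolding s_def by simp
    have hML: "M + 1 = M' + D + L" using M L1 by simp
    have wM: "w (k-1) \<le> M'" using wk1 by simp
    have aD: "a = w (k-1) + d" using a_def by simp
    have col': "coloring (r-1) L psi'"
      unfolding coloring_def
    proof
      fix j assume j: "j \<in> {1..L}"
      have j1: "1 \<le> j" "j \<le> L" using j by auto
      have "j + s \<le> M" using j1 sa hML wM aD dD by linarith
      then have "j + s \<in> {1..M}" using j1 by simp
      then have lt: "psi (j + s) < r" using col unfolding coloring_def by blast
      have ne: "psi (j + s) \<noteq> c" using noc j by blast
      show "psi' j < r - 1"
      proof (cases "psi (j + s) > c")
        case True
        then have "psi' j = psi (j + s) - 1" unfolding psi'_def g_def by simp
        then show ?thesis using lt True by linarith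
      next
        case False
        then have "psi' j = psi (j + s)" unfolding psi'_def g_def by simp
        then show ?thesis using ne False cr by linarith
      qed
    qed
    then obtain u where u: "mono_wave psi' L k u" using E2 by blast
    define w' where "w' = (\<lambda>i. u i + s)"
    have ur: "\<And>i. i \<in> {1..k} \<Longrightarrow> 1 \<le> u i \<and> u i \<le> L"
      using u unfolding mono_wave_def ascending_wave_def by blast
    have nc: "\<And>i. i \<in> {1..k} \<Longrightarrow> psi (w' i) \<noteq> c"
    proof -
      fix i assume "i \<in> {1..k}"
      then have "u i \<in> {1..L}" using ur by simp
      then show "psi (w' i) \<noteq> c" using noc unfolding w'_def by blast
    qed
    have ginj: "\<And>v v'. v \<noteq> c \<Longrightarrow> v' \<noteq> c \<Longrightarrow> g v = g v' \<Longrightarrow> v = v'"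
      unfolding g_def by (auto split: if_splits)
    have "mono_wave psi M k w'"
      unfolding mono_wave_def
    proof (intro conjI ballI)
      show "ascending_wave w' k" using u wave_shift unfolding w'_def mono_wave_def by blast
      fix i assume i: "i \<in> {1..k}"
      have "u i \<le> L" using ur[OF i] by simp
      then show "w' i \<le> M" unfolding w'_def using sa hML wM aD dD by linarith
      have i1: "1 \<in> {1..k}" using k3 by auto
      have "psi' (u i) = psi' (u 1)"
        using u i unfolding mono_wave_def by blast
      then have "g (psi (w' i)) = g (psi (w' 1))"
        unfolding psi'_def w'_def by simp
      then show "psi (w' i) = psi (w' 1)" using ginj nc[OF i] nc[OF i1] by blast
    qed
    moreover have "w' k - w' (k-1) \<le> D + L - 1"
    proof -
      have "1 \<le> u (k-1)" "u k \<le> L" using ur[of k] ur[of "k-1"] k3 by auto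
      then show ?thesis unfolding w'_def by simp
    qed
    ultimately show ?thesis by blast
  qed
qed

lemma delta_min:
  assumes "k \<ge> 1" and "mono_wave psi M k w"
  shows "delta k M psi \<le> w k - w (k - 1)"
proof -
  let ?S = "{w k - w (k - 1) | w. mono_wave psi M k w}"
  have "?S \<subseteq> {..M}"
  proof
    fix x assume "x \<in> ?S"
    then obtain w where "x = w k - w (k - 1)" "mono_wave psi M k w" by blast
    then show "x \<in> {..M}" using assms(1) unfolding mono_wave_def by force
  qed
  then have fin: "finite ?S" using finite_subset by blast
  show ?thesis unfolding delta_def using assms(2) by (intro Min_le[OF fin]) blast
qed

lemma Mf_step: "k \<ge> 3 \<Longrightarrow> r \<ge> 2 \<Longrightarrow>
   Mf k r = Mf (k - 1) r + Delta (Mf (k - 1) r) (k - 1) r + Mf k (r - 1) - 1"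
  by (subst Mf.simps) simp

lemma exists_wave:
  "k \<ge> 1 \<Longrightarrow> r \<ge> 1 \<Longrightarrow> \<forall>psi. coloring r (Mf k r) psi \<longrightarrow> (\<exists>w. mono_wave psi (Mf k r) k w)"
proof (induction k r rule: Mf.induct)
  case (1 k r)
  show ?case
  proof (intro allI impI)
    fix psi assume col: "coloring r (Mf k r) psi"
    show "\<exists>w. mono_wave psi (Mf k r) k w"
    proof (cases "r = 1")
      case True
      then have Mk: "Mf k r = k" using 1 by (subst Mf.simps) simp
      have "mono_wave psi (Mf k r) k (\<lambda>i. i)"
        using col True unfolding Mk mono_wave_def ascending_wave_def coloring_def by auto
      then show ?thesis by blast
    next
      case r1: False
      show ?thesis
      proof (cases "k = 1")
        case True
        then have Mk: "Mf k r = 1" using 1 r1 by (subst Mf.simps) simp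
        have "mono_wave psi (Mf k r) k (\<lambda>i. 1)"
          using True unfolding Mk mono_wave_def ascending_wave_def by auto
        then show ?thesis by blast
      next
        case k1: False
        show ?thesis
        proof (cases "k = 2")
          case True
          then have Mk: "Mf k r = r + 1" using 1 r1 k1 by (subst Mf.simps) simp
          have "\<not> inj_on psi {1..r+1}"
          proof
            assume inj: "inj_on psi {1..r+1}"
            have "psi ` {1..r+1} \<subseteq> {..<r}" using col unfolding Mk coloring_def by auto
            from card_inj_on_le[OF inj this] show False by simp
          qed
          then obtain a b where ab: "a \<in> {1..r+1}" "b \<in> {1..r+1}" "a \<noteq> b" "psi a = psi b"
            unfolding inj_on_def by blast
          obtain x y where xy: "x \<in> {1..r+1}" "y \<in> {1..r+1}" "x < y" "psi x = psi y"
          proof (cases "a < b")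
            case True then show ?thesis using that ab by blast
          next
            case False then have "b < a" using ab by simp
            then show ?thesis using that[of b a] ab by simp
          qed
          have "mono_wave psi (Mf k r) k (\<lambda>i. if i \<le> 1 then x else y)"
            using xy True unfolding Mk mono_wave_def ascending_wave_def by auto
          then show ?thesis by blast
        next
          case k2: False
          have k3: "k \<ge> 3" using 1 k1 k2 by simp
          have r2: "r \<ge> 2" using 1 r1 by simp
          have E1: "\<forall>psi. coloring r (Mf (k-1) r) psi \<longrightarrow> (\<exists>w. mono_wave psi (Mf (k-1) r) (k-1) w)"
            using 1 k3 r2 by simp
          have E2: "\<forall>psi. coloring (r-1) (Mf k (r-1)) psi \<longrightarrow> (\<exists>w. mono_wave psi (Mf k (r-1)) k w)"
            using 1 k3 r2 by simp
          from step[OF k3 r2 E1 E2 refl Mf_step[OF k3 r2]] col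
          show ?thesis by blast
        qed
      qed
    qed
  qed
qed

theorem corollary1p2:
  fixes k r :: nat
  assumes "k \<ge> 3" and "r \<ge> 2"
  shows "Delta (Mf k r) k r \<le> Delta (Mf (k - 1) r) (k - 1) r + Mf k (r - 1) - 1"
proof (rule Delta_le)
  show "k \<ge> 1" "r \<ge> 1" using assms by auto
  show "\<forall>psi. coloring r (Mf k r) psi \<longrightarrow> (\<exists>w. mono_wave psi (Mf k r) k w)"
    using exists_wave assms by simp
  fix psi assume col: "coloring r (Mf k r) psi"
  have E1: "\<forall>psi. coloring r (Mf (k-1) r) psi \<longrightarrow> (\<exists>w. mono_wave psi (Mf (k-1) r) (k-1) w)"
    using exists_wave assms by simp
  have E2: "\<forall>psi. coloring (r-1) (Mf k (r-1)) psi \<longrightarrow> (\<exists>w. mono_wave psi (Mf k (r-1)) k w)"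
    using exists_wave assms by simp
  obtain w where w: "mono_wave psi (Mf k r) k w"
    "w k - w (k-1) \<le> Delta (Mf (k - 1) r) (k - 1) r + Mf k (r - 1) - 1"
    using step[OF assms E1 E2 refl Mf_step[OF assms] col] by blast
  have "delta k (Mf k r) psi \<le> w k - w (k-1)" using delta_min[OF _ w(1)] assms by simp
  then show "delta k (Mf k r) psi \<le> Delta (Mf (k - 1) r) (k - 1) r + Mf k (r - 1) - 1"
    using w(2) by linarith
qed

end
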